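(* Let $k:X\to Y$ be a homotopy equivalence and $x\in X$. If $Y$ is transfinitely $\pi_1$-commutative at $k(x)$, then $X$ is transfinitely $\pi_1$-commutative at $x$. In particular, if $f:(X,x)\to(Y,y)$ is a based homotopy equivalence, then $X$ is transfinitely $\pi_1$-commutative at $x$ if and only if $Y$ is transfinitely $\pi_1$-commutative at $y$.
   Context: Let $\mathbb{H}=\bigcup_nC_n$ be the Hawaiian earring ($C_n\subset\mathbb{R}^2$ the circle of radius $1/n$ centered at $(1/n,0)$, basepoint $b_0=(0,0)$), $\ell_n$ the counterclockwise loop on $C_n$. A sequence of loops $\alpha_n\in\Omega(X,x)$ is a null-sequence if every neighborhood of $x$ contains all but finitely many $\mathrm{Im}(\alpha_n)$; then there is a unique map $f:(\mathbb{H},b_0)\to(X,x)$ with $f\circ\ell_n=\alpha_n$. With $\mathcal{C}\subseteq[0,1]$ the middle-thirds Cantor set and $[0,1]\setminus\mathcal{C}=\bigcup_{n\ge1}\bigcup_{k=1}^{2^{n-1}}I_n^k$ (open intervals of length $3^{-n}$, indexed left to right for fixed $n$), $\ell_\tau$ is the loop with $\ell_\tau(\mathcal{C})=b_0$ equal to $\ell_{2^{n-1}+k-1}$ (linearly reparametrized) on $\overline{I_n^k}$, and $\prod_\tau\alpha_n:=f\circ\ell_\tau$. $X$ is transfinitely $\pi_1$-commutative at $x$ if $[\prod_\tau\alpha_n]=[\prod_\tau\alpha_{\phi(n)}]$ in $\pi_1(X,x)$ for every null-sequence $\alpha_n\in\Omega(X,x)$ and every bijection $\phi:\mathbb{N}\to\mathbb{N}$.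 *)

theory Defs
  imports "HOL-Analysis.Analysis"
begin

definition HE_circle :: "nat \<Rightarrow> complex set" where
  "HE_circle n = sphere (complex_of_real (1 / real n)) (1 / real n)"

definition hawaiian_earring :: "complex set" where
  "hawaiian_earring = (\<Union>n\<in>{1..}. HE_circle n)"

definition HE_base :: complex where
  "HE_base = 0"

definition HE_loop :: "nat \<Rightarrow> real \<Rightarrow> complex" where
  "HE_loop n t = complex_of_real (1 / real n)
      - complex_of_real (1 / real n) * exp (2 * pi * \<i> * complex_of_real t)"

text \<open>Left endpoint of the open interval I_n^k (n \<ge> 1, 1 \<le> k \<le> 2^(n-1)),
  of length 3^(-n); intervals indexed left to right for fixed n.\<close>
definition gap_left :: "nat \<Rightarrow> nat \<Rightarrow> real" where
  "gap_left n k = (\<Sum>i<n-1. 2 * real (((k - 1) div 2 ^ i) mod 2) / 3 ^ (n - 1 - i)) + 1 / 3 ^ n"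

definition gap_index :: "nat \<Rightarrow> nat \<Rightarrow> bool" where
  "gap_index n k \<longleftrightarrow> 1 \<le> n \<and> 1 \<le> k \<and> k \<le> 2 ^ (n - 1)"

text \<open>The loop l_tau: constant at the base point on the Cantor set, equal to the
  (linearly reparametrised) loop l_(2^(n-1)+k-1) on the closure of I_n^k.\<close>
definition tau_loop :: "real \<Rightarrow> complex" where
  "tau_loop t =
    (if \<exists>n k. gap_index n k \<and> t \<in> {gap_left n k .. gap_left n k + 1 / 3 ^ n}
     then (let (n, k) = (SOME (n, k). gap_index n k \<and> t \<in> {gap_left n k .. gap_left n k + 1 / 3 ^ n})
           in HE_loop (2 ^ (n - 1) + k - 1) ((t - gap_left n k) * 3 ^ n))
     else HE_base)"

definition loop_at :: "'a topology \<Rightarrow> 'a \<Rightarrow> (real \<Rightarrow> 'a) \<Rightarrow> bool" where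
  "loop_at X x g \<longleftrightarrow> pathin X g \<and> g 0 = x \<and> g 1 = x"

text \<open>Sequences are indexed by n \<ge> 1, as in the paper; the value at 0 is irrelevant.\<close>
definition null_sequence :: "'a topology \<Rightarrow> 'a \<Rightarrow> (nat \<Rightarrow> real \<Rightarrow> 'a) \<Rightarrow> bool" where
  "null_sequence X x \<alpha> \<longleftrightarrow>
     (\<forall>n\<ge>1. loop_at X x (\<alpha> n)) \<and>
     (\<forall>U. openin X U \<and> x \<in> U \<longrightarrow> (\<exists>N. \<forall>n\<ge>N. \<alpha> n ` {0..1} \<subseteq> U))"

definition induced_map :: "'a topology \<Rightarrow> 'a \<Rightarrow> (nat \<Rightarrow> real \<Rightarrow> 'a) \<Rightarrow> complex \<Rightarrow> 'a" where
  "induced_map X x \<alpha> = (SOME f. continuous_map (top_of_set hawaiian_earring) X f \<and> f HE_base = x \<and>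
       (\<forall>n\<ge>1. \<forall>t\<in>{0..1}. f (HE_loop n t) = \<alpha> n t))"

definition transfinite_product :: "'a topology \<Rightarrow> 'a \<Rightarrow> (nat \<Rightarrow> real \<Rightarrow> 'a) \<Rightarrow> real \<Rightarrow> 'a" where
  "transfinite_product X x \<alpha> = induced_map X x \<alpha> \<circ> tau_loop"

text \<open>Equality of classes in pi_1(X,x): homotopy of paths rel endpoints, parametrised on [0,1].\<close>
definition path_homotopic_in :: "'a topology \<Rightarrow> (real \<Rightarrow> 'a) \<Rightarrow> (real \<Rightarrow> 'a) \<Rightarrow> bool" where
  "path_homotopic_in X p q \<longleftrightarrow>
     (\<exists>h. continuous_map (prod_topology (top_of_set {0..1::real}) (top_of_set {0..1::real})) X h \<and>
          (\<forall>t\<in>{0..1}. h (0, t) = p t \<and> h (1, t) = q t) \<and>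
          (\<forall>s\<in>{0..1}. h (s, 0) = p 0 \<and> h (s, 1) = p 1))"

definition transfinitely_pi1_commutative :: "'a topology \<Rightarrow> 'a \<Rightarrow> bool" where
  "transfinitely_pi1_commutative X x \<longleftrightarrow>
     (\<forall>\<alpha> \<phi>. null_sequence X x \<alpha> \<and> bij_betw \<phi> {1..} {1..} \<longrightarrow>
        path_homotopic_in X (transfinite_product X x \<alpha>) (transfinite_product X x (\<alpha> \<circ> \<phi>)))"

definition homotopy_equivalence :: "'a topology \<Rightarrow> 'b topology \<Rightarrow> ('a \<Rightarrow> 'b) \<Rightarrow> bool" where
  "homotopy_equivalence X Y k \<longleftrightarrow> continuous_map X Y k \<and>
     (\<exists>g. continuous_map Y X g \<and>
          homotopic_with (\<lambda>h. True) X X (g \<circ> k) id \<and>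
          homotopic_with (\<lambda>h. True) Y Y (k \<circ> g) id)"

definition based_homotopy_equivalence ::
    "'a topology \<Rightarrow> 'a \<Rightarrow> 'b topology \<Rightarrow> 'b \<Rightarrow> ('a \<Rightarrow> 'b) \<Rightarrow> bool" where
  "based_homotopy_equivalence X x Y y f \<longleftrightarrow> x \<in> topspace X \<and> y \<in> topspace Y \<and>
     continuous_map X Y f \<and> f x = y \<and>
     (\<exists>g. continuous_map Y X g \<and> g y = x \<and>
          homotopic_with (\<lambda>h. h x = x) X X (g \<circ> f) id \<and>
          homotopic_with (\<lambda>h. h y = y) Y Y (f \<circ> g) id)"

end

theory Submission
  imports Defs
begin


definition cc :: "nat \<Rightarrow> nat \<Rightarrow> real" where
  "cc m j = (\<Sum>i<m. 2 * real ((j div 2 ^ i) mod 2) / 3 ^ (m - i))"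

definition qq :: "nat \<Rightarrow> real" where "qq m = 1 / 3 ^ Suc m"

lemma qq_pos: "0 < qq m" by (simp add: qq_def)

definition Ogap :: "nat \<Rightarrow> nat \<Rightarrow> real set" where
  "Ogap m j = {cc m j <..< cc m j + 3 * qq m}"

definition JJ :: "nat \<Rightarrow> nat \<Rightarrow> real set" where
  "JJ m j = {cc m j + qq m .. cc m j + 2 * qq m}"

lemma cc_0 [simp]: "cc 0 j = 0" by (simp add: cc_def)

lemma qq_Suc: "3 * qq (Suc m) = qq m" by (simp add: qq_def)

lemma cc_Suc: "cc (Suc m) j = cc m (j div 2) + 6 * real (j mod 2) * qq (Suc m)"
proof -
  have "cc (Suc m) j = 2 * real (j mod 2) / 3 ^ Suc m +
     (\<Sum>i<m. 2 * real ((j div 2 ^ Suc i) mod 2) / 3 ^ (Suc m - Suc i))"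
    unfolding cc_def by (subst sum.lessThan_Suc_shift) simp
  also have "(\<Sum>i<m. 2 * real ((j div 2 ^ Suc i) mod 2) / 3 ^ (Suc m - Suc i)) = cc m (j div 2)"
    unfolding cc_def by (intro sum.cong refl) (simp add: div_mult2_eq)
  finally show ?thesis by (simp add: qq_def)
qed

lemma JJ_sub_Ogap: "JJ m j \<subseteq> Ogap m j"
  using qq_pos[of m] by (auto simp: JJ_def Ogap_def)

lemma Ogap_Suc_sub: "Ogap (Suc m) j \<subseteq> Ogap m (j div 2)"
proof -
  have "j mod 2 = 0 \<or> j mod 2 = 1" by auto
  then show ?thesis using qq_pos[of "Suc m"] qq_Suc[of m] by (auto simp: Ogap_def cc_Suc)
qed

lemma Ogap_Suc_JJ: "Ogap (Suc m) j \<inter> JJ m (j div 2) = {}"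
proof -
  have "j mod 2 = 0 \<or> j mod 2 = 1" by auto
  then show ?thesis using qq_pos[of "Suc m"] qq_Suc[of m] by (auto simp: Ogap_def JJ_def cc_Suc)
qed

lemma Ogap_add_sub: "Ogap (m + p) j \<subseteq> Ogap m (j div 2 ^ p)"
proof (induction p arbitrary: j)
  case 0 then show ?case by simp
next
  case (Suc p)
  have "Ogap (m + Suc p) j \<subseteq> Ogap (m + p) (j div 2)" using Ogap_Suc_sub by simp
  also have "\<dots> \<subseteq> Ogap m (j div 2 div 2 ^ p)" by (rule Suc)
  finally show ?case by (simp add: div_mult2_eq mult.commute)
qed

lemma Ogap_disj: "j < 2 ^ m \<Longrightarrow> j' < 2 ^ m \<Longrightarrow> j \<noteq> j' \<Longrightarrow> Ogap m j \<inter> Ogap m j' = {}"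
proof (induction m arbitrary: j j')
  case 0 then show ?case by simp
next
  case (Suc m)
  show ?case
  proof (cases "j div 2 = j' div 2")
    case False
    have "j div 2 < 2 ^ m" "j' div 2 < 2 ^ m" using Suc.prems by auto
    with Suc.IH[OF this False] Ogap_Suc_sub[of m j] Ogap_Suc_sub[of m j'] show ?thesis by blast
  next
    case True
    with Suc.prems have "j mod 2 \<noteq> j' mod 2"
      by (metis div_mult_mod_eq)
    then have "(j mod 2 = 0 \<and> j' mod 2 = 1) \<or> (j mod 2 = 1 \<and> j' mod 2 = 0)" by auto
    then show ?thesis using True qq_pos[of "Suc m"]
      by (auto simp: Ogap_def cc_Suc)
  qed
qed

lemma Ogap_01: "Ogap m j \<subseteq> {0<..<1}"
  using Ogap_add_sub[of 0 m j] by (simp add: Ogap_def qq_def)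

lemma JJ_disj:
  assumes "j < 2 ^ m" "j' < 2 ^ m'" "(m, j) \<noteq> (m', j')"
  shows "JJ m j \<inter> JJ m' j' = {}"
proof -
  have main: "JJ m j \<inter> JJ m' j' = {}" if "m < m'" "j < 2 ^ m" "j' < 2 ^ m'" for m j m' j'
  proof -
    obtain p where p: "m' = Suc m + p" using \<open>m < m'\<close> less_iff_Suc_add by auto
    define j'' where "j'' = j' div 2 ^ p"
    have sub: "JJ m' j' \<subseteq> Ogap (Suc m) j''"
      using JJ_sub_Ogap[of m' j'] Ogap_add_sub[of "Suc m" p j'] p j''_def by auto
    show ?thesis
    proof (cases "j'' div 2 = j")
      case True
      then show ?thesis using sub Ogap_Suc_JJ[of m j''] by blast
    next
      case False
      have "j'' div 2 < 2 ^ m"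
        using that(3) p unfolding j''_def
        by (simp add: div_mult2_eq[symmetric] less_mult_imp_div_less power_add mult.commute power_Suc)
      then have "Ogap m (j'' div 2) \<inter> Ogap m j = {}" using Ogap_disj False that(2) by blast
      then show ?thesis using sub Ogap_Suc_sub[of m j''] JJ_sub_Ogap[of m j] by blast
    qed
  qed
  show ?thesis
  proof (cases "m = m'")
    case True
    then have "j \<noteq> j'" using assms by auto
    then show ?thesis using Ogap_disj[of j m j'] assms True JJ_sub_Ogap by blast
  next
    case False
    then show ?thesis using main assms by (metis Int_commute linorder_neq_iff)
  qed
qed



lemma gap_index_iff: "gap_index n k \<longleftrightarrow> (\<exists>m j. n = Suc m \<and> k = Suc j \<and> j < 2 ^ m)"
  unfolding gap_index_def
  by (cases n; cases k) auto

lemma gap_left_eq: "gap_left (Suc m) (Suc j) = cc m j + qq m"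
  unfolding gap_left_def cc_def qq_def by (simp only: diff_Suc_1)

lemma gap_set: "{gap_left (Suc m) (Suc j) .. gap_left (Suc m) (Suc j) + 1 / 3 ^ Suc m} = JJ m j"
proof -
  have "1 / 3 ^ Suc m = qq m" by (simp add: qq_def)
  then show ?thesis unfolding JJ_def gap_left_eq by (simp add: algebra_simps)
qed

lemma e1: "exp (complex_of_real (2 * pi) * \<i> * complex_of_real t) = cis (2 * pi * t)"
  by (simp add: cis_conv_exp mult.commute mult.left_commute)
lemma HE_loop_cis: "HE_loop n t = complex_of_real (1 / real n) - complex_of_real (1 / real n) * cis (2 * pi * t)"
  unfolding HE_loop_def e1 ..
lemma HE_loop_0 [simp]: "HE_loop n 0 = 0" unfolding HE_loop_cis by simp
lemma HE_loop_1 [simp]: "HE_loop n 1 = 0" unfolding HE_loop_cis by simp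

definition gfun :: "nat \<Rightarrow> nat \<Rightarrow> real \<Rightarrow> complex" where
  "gfun m j t = HE_loop (2 ^ m + j) (max 0 (min 1 ((t - (cc m j + qq m)) / qq m)))"

lemma gfun_out:
  assumes "t \<notin> JJ m j" shows "gfun m j t = 0"
proof -
  let ?a = "cc m j + qq m"
  have q: "0 < qq m" by (rule qq_pos)
  from assms have "t < ?a \<or> t > ?a + qq m" by (auto simp: JJ_def)
  then show ?thesis
  proof
    assume "t < ?a"
    then have "(t - ?a) / qq m < 0" using q by (simp add: divide_neg_pos)
    then show ?thesis unfolding gfun_def by simp
  next
    assume "t > ?a + qq m"
    then have "(t - ?a) / qq m > 1" using q by (simp add: less_divide_eq)
    then show ?thesis unfolding gfun_def by simp
  qed
qed

lemma tau_eq: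
  assumes "j < 2 ^ m" "t \<in> JJ m j"
  shows "tau_loop t = gfun m j t"
proof -
  let ?P = "\<lambda>(n, k). gap_index n k \<and> t \<in> {gap_left n k .. gap_left n k + 1 / 3 ^ n}"
  have ex: "?P (Suc m, Suc j)" using assms gap_set[of m j] by (auto simp: gap_index_iff)
  have uniq: "p = (Suc m, Suc j)" if "?P p" for p
  proof -
    obtain n k where p: "p = (n, k)" by fastforce
    with that have "gap_index n k" "t \<in> {gap_left n k .. gap_left n k + 1 / 3 ^ n}" by auto
    then obtain m' j' where mj: "n = Suc m'" "k = Suc j'" "j' < 2 ^ m'" "t \<in> JJ m' j'"
      unfolding gap_index_iff using gap_set by metis
    then have "(m', j') = (m, j)" using JJ_disj[of j' m' j m] assms by blast
    then show ?thesis using p mj by simp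
  qed
  have some: "(SOME p. ?P p) = (Suc m, Suc j)"
    by (rule some_equality) (use ex uniq in auto)
  have ex': "\<exists>n k. gap_index n k \<and> t \<in> {gap_left n k .. gap_left n k + 1 / 3 ^ n}" using ex by blast
  have "tau_loop t = HE_loop (2 ^ m + Suc j - 1) ((t - gap_left (Suc m) (Suc j)) * 3 ^ Suc m)"
    unfolding tau_loop_def some if_P[OF ex'] by simp
  also have "\<dots> = gfun m j t"
  proof -
    have g: "gap_left (Suc m) (Suc j) = cc m j + qq m" by (rule gap_left_eq)
    have "(t - (cc m j + qq m)) / qq m \<in> {0..1}"
      using assms(2) qq_pos[of m] by (auto simp: JJ_def divide_simps)
    moreover have "(t - (cc m j + qq m)) * 3 ^ Suc m = (t - (cc m j + qq m)) / qq m"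
      by (simp add: qq_def)
    ultimately show ?thesis unfolding gfun_def g by simp
  qed
  finally show ?thesis .
qed

lemma tau_out:
  assumes "\<And>m j. j < 2 ^ m \<Longrightarrow> t \<notin> JJ m j"
  shows "tau_loop t = 0"
proof -
  have "\<not> (\<exists>n k. gap_index n k \<and> t \<in> {gap_left n k .. gap_left n k + 1 / 3 ^ n})"
  proof
    assume "\<exists>n k. gap_index n k \<and> t \<in> {gap_left n k .. gap_left n k + 1 / 3 ^ n}"
    then obtain n k where "gap_index n k" "t \<in> {gap_left n k .. gap_left n k + 1 / 3 ^ n}" by blast
    then obtain m' j' where mj: "j' < 2 ^ m'" "t \<in> JJ m' j'"
      unfolding gap_index_iff using gap_set by metis
    then show False using assms by blast
  qed
  then show ?thesis unfolding tau_loop_def HE_base_def by (rule if_not_P)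
qed

lemma norm_HE_loop: "norm (HE_loop n s) \<le> 2 / real n"
proof -
  have "norm (HE_loop n s) \<le> norm (complex_of_real (1 / real n)) + norm (complex_of_real (1 / real n) * cis (2 * pi * s))"
    unfolding HE_loop_cis by (rule norm_triangle_ineq4)
  also have "norm (complex_of_real (1 / real n) * cis (2 * pi * s)) = 1 / real n"
    by (simp add: norm_mult norm_divide)
  also have "norm (complex_of_real (1 / real n)) = 1 / real n"
    by (simp add: norm_divide)
  finally show ?thesis by simp
qed

lemma gfun_norm: "norm (gfun m j t) \<le> 2 / 2 ^ m"
proof -
  have "norm (gfun m j t) \<le> 2 / real (2 ^ m + j)" unfolding gfun_def by (rule norm_HE_loop)
  also have "\<dots> \<le> 2 / 2 ^ m" by (simp add: frac_le)
  finally show ?thesis .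
qed

lemma HE_loop_cont: "continuous_on UNIV (HE_loop n)"
  unfolding HE_loop_def by (intro continuous_intros)

lemma gfun_cont: "continuous_on UNIV (gfun m j)"
proof -
  have c: "continuous_on UNIV (\<lambda>t. max 0 (min 1 ((t - (cc m j + qq m)) / qq m)))"
    using qq_pos[of m] by (intro continuous_intros) auto
  show ?thesis unfolding gfun_def
    by (rule continuous_on_compose2[OF HE_loop_cont c]) auto
qed



lemma HE_loop_circle: "HE_loop n s \<in> HE_circle n"
proof -
  have "dist (complex_of_real (1 / real n)) (HE_loop n s) = norm (complex_of_real (1 / real n) * cis (2 * pi * s))"
    unfolding HE_loop_cis dist_norm by simp
  also have "\<dots> = 1 / real n" by (simp add: norm_mult norm_divide)
  finally show ?thesis unfolding HE_circle_def by simp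
qed

lemma HE_loop_earring: "n \<ge> 1 \<Longrightarrow> HE_loop n s \<in> hawaiian_earring"
  unfolding hawaiian_earring_def using HE_loop_circle by auto

lemma tau_earring: "tau_loop t \<in> hawaiian_earring"
proof (cases "\<exists>m j. j < 2 ^ m \<and> t \<in> JJ m j")
  case True
  then obtain m j where "j < 2 ^ m" "t \<in> JJ m j" by blast
  then show ?thesis using tau_eq HE_loop_earring unfolding gfun_def by simp
next
  case False
  then have "tau_loop t = HE_loop 1 0" using tau_out by auto
  then show ?thesis using HE_loop_earring[of 1 0] by simp
qed

lemma tau_0: "tau_loop 0 = 0"
  by (rule tau_out) (use JJ_sub_Ogap Ogap_01 in fastforce)

lemma tau_1: "tau_loop 1 = 0"
  by (rule tau_out) (use JJ_sub_Ogap Ogap_01 in fastforce)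

lemma tau_approx:
  fixes M :: nat
  defines "F \<equiv> Sigma {..<M} (\<lambda>m. {..<(2::nat) ^ m})"
  shows "norm (tau_loop t - (\<Sum>p\<in>F. gfun (fst p) (snd p) t)) \<le> 2 / 2 ^ M"
proof -
  have finF: "finite F" unfolding F_def by auto
  show ?thesis
  proof (cases "\<exists>m j. j < 2 ^ m \<and> t \<in> JJ m j")
    case True
    then obtain m j where mj: "j < 2 ^ m" "t \<in> JJ m j" by blast
    have "(\<Sum>p\<in>F. gfun (fst p) (snd p) t) = (\<Sum>p\<in>F. if p = (m, j) then gfun m j t else 0)"
    proof (rule sum.cong[OF refl])
      fix p assume "p \<in> F"
      then have "snd p < 2 ^ fst p" unfolding F_def by auto
      then show "gfun (fst p) (snd p) t = (if p = (m, j) then gfun m j t else 0)"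
        using JJ_disj[of "snd p" "fst p" j m] mj gfun_out[of t "fst p" "snd p"]
        by (cases p) auto
    qed
    also have "\<dots> = (if (m, j) \<in> F then gfun m j t else 0)"
      by (rule sum.delta[OF finF])
    finally have G: "(\<Sum>p\<in>F. gfun (fst p) (snd p) t) = (if (m, j) \<in> F then gfun m j t else 0)" .
    have tau: "tau_loop t = gfun m j t" using tau_eq mj by blast
    show ?thesis
    proof (cases "(m, j) \<in> F")
      case True
      then show ?thesis using G tau by simp
    next
      case False
      then have "M \<le> m" using mj unfolding F_def by auto
      have "norm (gfun m j t) \<le> 2 / 2 ^ m" by (rule gfun_norm)
      also have "\<dots> \<le> 2 / 2 ^ M" using \<open>M \<le> m\<close> by (simp add: frac_le)
      finally show ?thesis using G tau False by simp
    qed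
  next
    case False
    then have "tau_loop t = 0" using tau_out by auto
    moreover have "(\<Sum>p\<in>F. gfun (fst p) (snd p) t) = 0"
      by (rule sum.neutral) (use False gfun_out in \<open>auto simp: F_def\<close>)
    ultimately show ?thesis by simp
  qed
qed

lemma tau_cont: "continuous_on UNIV tau_loop"
  unfolding continuous_on_iff
proof (intro ballI allI impI)
  fix t0 :: real and e :: real
  assume e: "0 < e"
  obtain M :: nat where M: "6 / e < 2 ^ M" using real_arch_pow[of 2 "6 / e"] by auto
  have M': "2 / 2 ^ M < e / 3" using M e by (simp add: field_simps)
  define F where "F = Sigma {..<M} (\<lambda>m. {..<(2::nat) ^ m})"
  define G where "G t = (\<Sum>p\<in>F. gfun (fst p) (snd p) t)" for t
  have Gc: "continuous_on UNIV G"
    unfolding G_def by (intro continuous_on_sum) (use gfun_cont in auto)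
  obtain d where d: "d > 0" "\<And>t. dist t t0 < d \<Longrightarrow> dist (G t) (G t0) < e / 3"
    using Gc e unfolding continuous_on_iff by (metis UNIV_I divide_pos_pos zero_less_numeral)
  have ap: "norm (tau_loop t - G t) \<le> 2 / 2 ^ M" for t
    unfolding G_def F_def by (rule tau_approx)
  show "\<exists>d>0. \<forall>t\<in>UNIV. dist t t0 < d \<longrightarrow> dist (tau_loop t) (tau_loop t0) < e"
  proof (intro exI conjI ballI impI)
    show "d > 0" by (rule d)
    fix t assume "dist t t0 < d"
    then have "dist (G t) (G t0) < e / 3" by (rule d)
    moreover have "dist (tau_loop t) (tau_loop t0) \<le> norm (tau_loop t - G t) + dist (G t) (G t0) + norm (tau_loop t0 - G t0)"
    proof -
      have eq: "tau_loop t - tau_loop t0 = ((tau_loop t - G t) + (G t - G t0)) - (tau_loop t0 - G t0)"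
        by (simp add: algebra_simps)
      have "norm (tau_loop t - tau_loop t0) \<le> norm ((tau_loop t - G t) + (G t - G t0)) + norm (tau_loop t0 - G t0)"
        by (subst eq, rule norm_triangle_ineq4)
      also have "norm ((tau_loop t - G t) + (G t - G t0)) \<le> norm (tau_loop t - G t) + norm (G t - G t0)"
        by (rule norm_triangle_ineq)
      finally show ?thesis unfolding dist_norm by simp
    qed
    ultimately show "dist (tau_loop t) (tau_loop t0) < e" using ap[of t] ap[of t0] M' by linarith
  qed
qed



lemma cis_eq_imp:
  assumes "cis a = cis b" shows "\<exists>k::int. a = b + 2 * pi * of_int k"
proof -
  from assms have "exp (\<i> * complex_of_real a) = exp (\<i> * complex_of_real b)"
    by (simp add: cis_conv_exp)
  then obtain k :: int where k: "\<i> * complex_of_real a = \<i> * complex_of_real b + (of_int (2 * k) * pi) * \<i>"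
    unfolding exp_eq by blast
  have "Im (\<i> * complex_of_real a) = Im (\<i> * complex_of_real b + (of_int (2 * k) * pi) * \<i>)"
    using k by simp
  then have "a = b + 2 * pi * of_int k" by simp
  then show ?thesis by blast
qed

lemma t01_int:
  assumes "t \<in> {0..1}" "s \<in> {0..(1::real)}" "t = s + of_int k"
  shows "t = s \<or> (t = 0 \<and> s = 1) \<or> (t = 1 \<and> s = 0)"
proof -
  have "of_int k \<le> (1::real)" "of_int k \<ge> (-1::real)" using assms by auto
  then have "k \<le> 1" "k \<ge> -1" by linarith+
  then have "k = -1 \<or> k = 0 \<or> k = 1" by linarith
  then show ?thesis using assms by auto
qed

lemma HE_loop_eq_0:
  assumes "n \<ge> 1" "t \<in> {0..1}" "HE_loop n t = 0"
  shows "t = 0 \<or> t = 1"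
proof -
  have "complex_of_real (1 / real n) * (1 - cis (2 * pi * t)) = 0"
    using assms(3) unfolding HE_loop_cis by (simp add: algebra_simps)
  then have "cis (2 * pi * t) = cis (2 * pi * 0)" using assms(1) by simp
  then obtain k :: int where "2 * pi * t = 2 * pi * 0 + 2 * pi * of_int k" using cis_eq_imp by blast
  then have "t = 0 + of_int k" by simp
  then show ?thesis using t01_int[of t 0 k] assms(2) by auto
qed

lemma circles_meet:
  fixes z :: complex and r r' :: real
  assumes "cmod (complex_of_real r - z) = r" "cmod (complex_of_real r' - z) = r'" "z \<noteq> 0"
  shows "r = r'"
proof -
  have "(cmod (complex_of_real r - z))^2 = r^2" using assms by simp
  then have a: "(r - Re z)^2 + (Im z)^2 = r^2" unfolding cmod_power2 by simp
  have "(cmod (complex_of_real r' - z))^2 = r'^2" using assms by simp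
  then have b: "(r' - Re z)^2 + (Im z)^2 = r'^2" unfolding cmod_power2 by simp
  from a b have "2 * (r - r') * Re z = 0" by (simp add: power2_eq_square algebra_simps)
  moreover have "Re z \<noteq> 0"
  proof
    assume "Re z = 0"
    with a have "Im z = 0" by (simp add: power2_eq_square)
    with \<open>Re z = 0\<close> assms(3) show False by (simp add: complex_eq_iff)
  qed
  ultimately show ?thesis by simp
qed

lemma HE_loop_inj:
  assumes "n \<ge> 1" "m \<ge> 1" "t \<in> {0..1}" "s \<in> {0..1}" "HE_loop n t = HE_loop m s" "HE_loop n t \<noteq> 0"
  shows "n = m \<and> t = s"
proof -
  have c1: "cmod (complex_of_real (1 / real n) - HE_loop n t) = 1 / real n"
    using HE_loop_circle[of n t] unfolding HE_circle_def by (simp add: dist_norm)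
  have c2: "cmod (complex_of_real (1 / real m) - HE_loop n t) = 1 / real m"
    using HE_loop_circle[of m s] assms(5) unfolding HE_circle_def by (simp add: dist_norm)
  have "1 / real n = 1 / real m" by (rule circles_meet[OF c1 c2 assms(6)])
  then have nm: "n = m" using assms by simp
  with assms(5) have "complex_of_real (1 / real n) * cis (2 * pi * t) = complex_of_real (1 / real n) * cis (2 * pi * s)"
    unfolding HE_loop_cis by simp
  then have "cis (2 * pi * t) = cis (2 * pi * s)" using assms(1) by simp
  then obtain k :: int where "2 * pi * t = 2 * pi * s + 2 * pi * of_int k" using cis_eq_imp by blast
  then have "2 * pi * t = 2 * pi * (s + of_int k)" by (simp add: algebra_simps)
  then have "t = s + of_int k" by simp
  then have "t = s \<or> (t = 0 \<and> s = 1) \<or> (t = 1 \<and> s = 0)" using t01_int assms by blast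
  then show ?thesis using nm assms(6) by auto
qed

lemma circle_param:
  assumes "n \<ge> 1" "z \<in> HE_circle n"
  shows "\<exists>t\<in>{0..1}. z = HE_loop n t"
proof -
  define r where "r = 1 / real n"
  have r: "r > 0" using assms unfolding r_def by simp
  define u where "u = (complex_of_real r - z) / complex_of_real r"
  have "cmod (complex_of_real r - z) = r" using assms(2) unfolding HE_circle_def r_def by (simp add: dist_norm)
  then have nu: "cmod u = 1" unfolding u_def using r by (simp add: norm_divide)
  define th where "th = Arg2pi u"
  have th: "0 \<le> th" "th < 2 * pi" "u = exp (\<i> * complex_of_real th)"
    using Arg2pi[of u] nu unfolding th_def is_Arg_def by auto
  define t where "t = th / (2 * pi)"
  have t: "t \<in> {0..1}" using th unfolding t_def by (auto simp: divide_simps)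
  have "cis (2 * pi * t) = u" unfolding t_def using th(3) by (simp add: cis_conv_exp)
  then have "HE_loop n t = complex_of_real r - complex_of_real r * u"
    unfolding HE_loop_cis r_def by simp
  also have "\<dots> = z" unfolding u_def using r by (simp add: field_simps)
  finally show ?thesis using t by metis
qed

lemma earring_eq: "hawaiian_earring = {HE_loop n t | n t. n \<ge> 1 \<and> t \<in> {0..1}}"
proof
  show "hawaiian_earring \<subseteq> {HE_loop n t | n t. n \<ge> 1 \<and> t \<in> {0..1}}"
    unfolding hawaiian_earring_def using circle_param by fastforce
  show "{HE_loop n t | n t. n \<ge> 1 \<and> t \<in> {0..1}} \<subseteq> hawaiian_earring"
    using HE_loop_earring by auto
qed



definition ind :: "'a \<Rightarrow> (nat \<Rightarrow> real \<Rightarrow> 'a) \<Rightarrow> complex \<Rightarrow> 'a" where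
  "ind x \<alpha> z = (if z = 0 then x else
     (let p = (SOME p. fst p \<ge> 1 \<and> snd p \<in> {0..1} \<and> z = HE_loop (fst p) (snd p)) in \<alpha> (fst p) (snd p)))"

lemma null_loop:
  assumes "null_sequence X x \<alpha>" "n \<ge> 1"
  shows "pathin X (\<alpha> n)" "\<alpha> n 0 = x" "\<alpha> n 1 = x"
  using assms unfolding null_sequence_def loop_at_def by auto

lemma null_top:
  assumes "null_sequence X x \<alpha>" "n \<ge> 1" "t \<in> {0..1}"
  shows "\<alpha> n t \<in> topspace X"
  using null_loop(1)[OF assms(1,2)] assms(3) unfolding pathin_def continuous_map_def by auto

lemma ind_loop:
  assumes "null_sequence X x \<alpha>" "n \<ge> 1" "t \<in> {0..1}"
  shows "ind x \<alpha> (HE_loop n t) = \<alpha> n t"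
proof (cases "HE_loop n t = 0")
  case True
  then have "t = 0 \<or> t = 1" using HE_loop_eq_0 assms by blast
  then show ?thesis using True null_loop[OF assms(1,2)] unfolding ind_def by auto
next
  case False
  let ?P = "\<lambda>p. fst p \<ge> 1 \<and> snd p \<in> {0..1} \<and> HE_loop n t = HE_loop (fst p) (snd p)"
  have "?P (n, t)" using assms by simp
  then have "?P (SOME p. ?P p)" by (rule someI)
  moreover obtain n' t' where p: "(SOME p. ?P p) = (n', t')" by fastforce
  ultimately have "n' \<ge> 1" "t' \<in> {0..1}" "HE_loop n t = HE_loop n' t'" by auto
  then have "n = n' \<and> t = t'" using HE_loop_inj[of n n' t t'] assms False by blast
  then have "(SOME p. ?P p) = (n, t)" using p by simp
  then show ?thesis using False unfolding ind_def Let_def by simp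
qed

lemma ind_0: "ind x \<alpha> 0 = x" by (simp add: ind_def)

lemma compact_Sn:
  assumes "null_sequence X x \<alpha>" "n \<ge> 1" "closedin X K"
  shows "compact (HE_loop n ` {t \<in> {0..1}. \<alpha> n t \<in> K})"
proof -
  have cm: "continuous_map (top_of_set {0..1}) X (\<alpha> n)"
    using null_loop(1)[OF assms(1,2)] unfolding pathin_def by simp
  have "closedin (top_of_set {0..1}) {t \<in> topspace (top_of_set {0..(1::real)}). \<alpha> n t \<in> K}"
    using cm assms(3) unfolding continuous_map_closedin by blast
  then have "closed {t \<in> {0..(1::real)}. \<alpha> n t \<in> K}"
    using closedin_closed_trans by fastforce
  moreover have "bounded {t \<in> {0..(1::real)}. \<alpha> n t \<in> K}"
    by (rule bounded_subset[of "{0..1}"]) auto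
  ultimately have "compact {t \<in> {0..(1::real)}. \<alpha> n t \<in> K}"
    using compact_eq_bounded_closed by blast
  then show ?thesis
    by (rule compact_continuous_image[OF continuous_on_subset[OF HE_loop_cont], rotated]) auto
qed

lemma Sn_small: "n \<ge> 1 \<Longrightarrow> HE_loop n ` A \<subseteq> cball 0 (2 / real n)"
  using norm_HE_loop by auto

lemma ind_cont:
  assumes "null_sequence X x \<alpha>"
  shows "continuous_map (top_of_set hawaiian_earring) X (ind x \<alpha>)"
  unfolding continuous_map_closedin
proof (intro conjI allI impI)
  have x: "x \<in> topspace X" using null_top[OF assms, of 1 0] null_loop[OF assms, of 1] by simp
  show "ind x \<alpha> \<in> topspace (top_of_set hawaiian_earring) \<rightarrow> topspace X"
  proof (rule Pi_I)
    fix z assume "z \<in> topspace (top_of_set hawaiian_earring)"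
    then have "z \<in> hawaiian_earring" by simp
    then obtain n t where nt: "n \<ge> 1" "t \<in> {0..1}" "z = HE_loop n t" unfolding earring_eq by blast
    then show "ind x \<alpha> z \<in> topspace X" using ind_loop[OF assms nt(1,2)] null_top[OF assms nt(1,2)] by simp
  qed
  fix K assume K: "closedin X K"
  define S where "S n = HE_loop n ` {t \<in> {0..1}. \<alpha> n t \<in> K}" for n
  have Seq: "{z \<in> topspace (top_of_set hawaiian_earring). ind x \<alpha> z \<in> K} = (\<Union>n\<in>{1..}. S n)"
  proof (rule equalityI)
    show "{z \<in> topspace (top_of_set hawaiian_earring). ind x \<alpha> z \<in> K} \<subseteq> (\<Union>n\<in>{1..}. S n)"
    proof
      fix z assume "z \<in> {z \<in> topspace (top_of_set hawaiian_earring). ind x \<alpha> z \<in> K}"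
      then have z: "z \<in> hawaiian_earring" "ind x \<alpha> z \<in> K" by auto
      then obtain n t where nt: "n \<ge> 1" "t \<in> {0..1}" "z = HE_loop n t" unfolding earring_eq by blast
      then have "\<alpha> n t \<in> K" using z(2) ind_loop[OF assms nt(1,2)] by simp
      then have "z \<in> S n" unfolding S_def using nt by blast
      then show "z \<in> (\<Union>n\<in>{1..}. S n)" using nt(1) by blast
    qed
    show "(\<Union>n\<in>{1..}. S n) \<subseteq> {z \<in> topspace (top_of_set hawaiian_earring). ind x \<alpha> z \<in> K}"
    proof
      fix z assume "z \<in> (\<Union>n\<in>{1..}. S n)"
      then obtain n where n: "n \<ge> 1" "z \<in> S n" by auto
      then obtain t where t: "t \<in> {0..1}" "\<alpha> n t \<in> K" "z = HE_loop n t" unfolding S_def by blast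
      have "z \<in> hawaiian_earring" using HE_loop_earring n(1) t(3) by simp
      moreover have "ind x \<alpha> z \<in> K" using ind_loop[OF assms n(1) t(1)] t by simp
      ultimately show "z \<in> {z \<in> topspace (top_of_set hawaiian_earring). ind x \<alpha> z \<in> K}" by simp
    qed
  qed
  have Sc: "closed (S n)" if "n \<ge> 1" for n
    unfolding S_def using compact_Sn[OF assms that K] compact_imp_closed by blast
  have closedS: "closed (\<Union>n\<in>{1..}. S n)"
  proof (cases "x \<in> K")
    case False
    have "openin X (topspace X - K)" using K by blast
    moreover have "x \<in> topspace X - K" using x False by blast
    ultimately obtain N where N: "\<And>n. n \<ge> N \<Longrightarrow> \<alpha> n ` {0..1} \<subseteq> topspace X - K"
      using assms unfolding null_sequence_def by blast
    have Se: "S n = {}" if "n \<ge> N" for n using N[OF that] unfolding S_def by blast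
    have e: "n < N" if "z \<in> S n" for z n
    proof (rule ccontr)
      assume "\<not> n < N"
      then have "S n = {}" using Se by simp
      then show False using that by simp
    qed
    have "(\<Union>n\<in>{1..}. S n) = (\<Union>n\<in>{1..<N}. S n)"
    proof (rule equalityI)
      show "(\<Union>n\<in>{1..}. S n) \<subseteq> (\<Union>n\<in>{1..<N}. S n)"
      proof
        fix z assume "z \<in> (\<Union>n\<in>{1..}. S n)"
        then obtain n where "n \<ge> 1" "z \<in> S n" by auto
        then show "z \<in> (\<Union>n\<in>{1..<N}. S n)" using e[of z n] by auto
      qed
      show "(\<Union>n\<in>{1..<N}. S n) \<subseteq> (\<Union>n\<in>{1..}. S n)" by (rule UN_mono) auto
    qed
    moreover have "closed (\<Union>n\<in>{1..<N}. S n)" using Sc by auto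
    ultimately show ?thesis by simp
  next
    case True
    show ?thesis unfolding closed_limpt
    proof (intro allI impI)
      fix w assume w: "w islimpt (\<Union>n\<in>{1..}. S n)"
      show "w \<in> (\<Union>n\<in>{1..}. S n)"
      proof (cases "w = 0")
        case True
        have "HE_loop 1 0 \<in> S 1" unfolding S_def using \<open>x \<in> K\<close> null_loop(2)[OF assms, of 1]
          by (intro imageI) simp
        then have "0 \<in> S 1" by simp
        then show ?thesis using True by auto
      next
        case False
        obtain N :: nat where N: "2 / norm w < real N" using reals_Archimedean2 by blast
        have "0 < 2 / norm w" using False by simp
        then have Npos: "N \<ge> 1" using N by (cases N) auto
        have "2 < real N * norm w" using N False by (simp add: divide_less_eq mult.commute)
        then have wN: "2 / real N < norm w" using Npos by (simp add: divide_less_eq mult.commute)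
        have "{1..} = {1..<N} \<union> {N..}" using Npos by auto
        then have split: "(\<Union>n\<in>{1..}. S n) = (\<Union>n\<in>{1..<N}. S n) \<union> (\<Union>n\<in>{N..}. S n)"
          by (simp only: UN_Un)
        have Bsub: "(\<Union>n\<in>{N..}. S n) \<subseteq> cball 0 (2 / real N)"
        proof
          fix z assume "z \<in> (\<Union>n\<in>{N..}. S n)"
          then obtain n where "n \<in> {N..}" "z \<in> S n" by blast
          then obtain t where "z = HE_loop n t" unfolding S_def by blast
          then have "z \<in> cball 0 (2 / real n)" using norm_HE_loop[of n t] by simp
          moreover have "2 / real n \<le> 2 / real N" using \<open>n \<in> {N..}\<close> Npos by (simp add: frac_le)
          ultimately show "z \<in> cball 0 (2 / real N)" by auto
        qed
        have "\<not> w islimpt (\<Union>n\<in>{N..}. S n)"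
        proof
          assume "w islimpt (\<Union>n\<in>{N..}. S n)"
          then have "w islimpt cball 0 (2 / real N)" by (rule islimpt_subset[OF _ Bsub])
          moreover have "\<forall>y. y islimpt cball 0 (2 / real N) \<longrightarrow> y \<in> cball 0 (2 / real N)"
            using closed_cball[of 0 "2 / real N"] unfolding closed_limpt .
          ultimately have "w \<in> cball 0 (2 / real N)" by blast
          then show False using wN by auto
        qed
        moreover have "w islimpt (\<Union>n\<in>{1..<N}. S n) \<or> w islimpt (\<Union>n\<in>{N..}. S n)"
          using w unfolding split islimpt_Un .
        ultimately have wl: "w islimpt (\<Union>n\<in>{1..<N}. S n)" by blast
        have "closed (\<Union>n\<in>{1..<N}. S n)" using Sc by auto
        then have "\<forall>y. y islimpt (\<Union>n\<in>{1..<N}. S n) \<longrightarrow> y \<in> (\<Union>n\<in>{1..<N}. S n)"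
          unfolding closed_limpt .
        then have "w \<in> (\<Union>n\<in>{1..<N}. S n)" using wl by blast
        then show ?thesis by auto
      qed
    qed
  qed
  have sub: "(\<Union>n\<in>{1..}. S n) \<subseteq> hawaiian_earring"
    unfolding S_def using HE_loop_earring by auto
  show "closedin (top_of_set hawaiian_earring) {z \<in> topspace (top_of_set hawaiian_earring). ind x \<alpha> z \<in> K}"
    unfolding Seq closedin_closed using closedS sub by blast
qed

lemma induced_exists:
  assumes "null_sequence X x \<alpha>"
  shows "\<exists>f. continuous_map (top_of_set hawaiian_earring) X f \<and> f HE_base = x \<and>
       (\<forall>n\<ge>1. \<forall>t\<in>{0..1}. f (HE_loop n t) = \<alpha> n t)"
proof (intro exI conjI allI impI ballI)
  show "continuous_map (top_of_set hawaiian_earring) X (ind x \<alpha>)" by (rule ind_cont[OF assms])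
  show "ind x \<alpha> HE_base = x" unfolding HE_base_def by (rule ind_0)
  fix n :: nat and t :: real assume "1 \<le> n" "t \<in> {0..(1::real)}"
  then show "ind x \<alpha> (HE_loop n t) = \<alpha> n t" by (rule ind_loop[OF assms])
qed

lemma induced_props:
  assumes "null_sequence X x \<alpha>"
  shows "continuous_map (top_of_set hawaiian_earring) X (induced_map X x \<alpha>)"
    "induced_map X x \<alpha> HE_base = x"
    "\<And>n t. n \<ge> 1 \<Longrightarrow> t \<in> {0..1} \<Longrightarrow> induced_map X x \<alpha> (HE_loop n t) = \<alpha> n t"
proof -
  have P: "continuous_map (top_of_set hawaiian_earring) X (induced_map X x \<alpha>) \<and> induced_map X x \<alpha> HE_base = x \<and>
       (\<forall>n\<ge>1. \<forall>t\<in>{0..1}. induced_map X x \<alpha> (HE_loop n t) = \<alpha> n t)"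
    unfolding induced_map_def by (rule someI_ex[OF induced_exists[OF assms]])
  then show "continuous_map (top_of_set hawaiian_earring) X (induced_map X x \<alpha>)"
    "induced_map X x \<alpha> HE_base = x" by blast+
  fix n :: nat and t :: real assume "n \<ge> 1" "t \<in> {0..1}"
  then show "induced_map X x \<alpha> (HE_loop n t) = \<alpha> n t" using P by blast
qed

lemma induced_unique:
  assumes "\<And>n t. n \<ge> 1 \<Longrightarrow> t \<in> {0..1} \<Longrightarrow> f (HE_loop n t) = g (HE_loop n t)" "z \<in> hawaiian_earring"
  shows "f z = g z"
proof -
  obtain n t where "n \<ge> 1" "t \<in> {0..1}" "z = HE_loop n t" using assms(2) unfolding earring_eq by blast
  then show ?thesis using assms(1) by simp
qed



lemma top_Times: "prod_topology (top_of_set A) (top_of_set B) = top_of_set (A \<times> B)"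
  by (metis subtopology_Times prod_topology_euclidean)

lemma sub_eq: "subtopology (top_of_set S) {z \<in> topspace (top_of_set S). P z} = top_of_set {z \<in> S. P z}"
  by (simp add: subtopology_subtopology Int_def)

lemma cm_real: "continuous_on S f \<Longrightarrow> (\<And>z. z \<in> S \<Longrightarrow> f z \<in> T) \<Longrightarrow> continuous_map (top_of_set S) (top_of_set T) f"
  by auto

lemma cvx01': "a \<in> {0..1} \<Longrightarrow> v \<in> {0..1} \<Longrightarrow> (1 - a) + a * v \<in> {0..(1::real)}"
proof -
  assume a: "a \<in> {0..1}" and v: "v \<in> {0..1}"
  then have "0 \<le> a * v" "a * v \<le> a" by (auto simp: mult_left_le)
  then show ?thesis using a by auto
qed

lemma cvx01: "a \<in> {0..1} \<Longrightarrow> u \<in> {0..1} \<Longrightarrow> v \<in> {0..1} \<Longrightarrow> (1 - a) * u + a * v \<in> {0..(1::real)}"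
  by (auto intro!: convex_bound_le)

definition cfun :: "real \<Rightarrow> real" where "cfun t = max 0 (max (1 - 3 * t) (3 * t - 2))"
definition dfun :: "real \<Rightarrow> real" where "dfun t = max 0 (min 1 (3 * t - 1))"

lemma cfun_01: "t \<in> {0..1} \<Longrightarrow> cfun t \<in> {0..1}" by (auto simp: cfun_def)
lemma dfun_01: "dfun t \<in> {0..1}" by (auto simp: dfun_def)
lemma cfun_ge0: "0 \<le> cfun t" by (auto simp: cfun_def)
lemma cfun_le1: "0 \<le> t \<Longrightarrow> t \<le> 1 \<Longrightarrow> cfun t \<le> 1" by (auto simp: cfun_def)
lemma cfun_cont: "continuous_on S cfun" unfolding cfun_def by (intro continuous_intros)
lemma dfun_cont: "continuous_on S dfun" unfolding dfun_def by (intro continuous_intros)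

definition Lh :: "(real \<times> 'a \<Rightarrow> 'a) \<Rightarrow> (real \<Rightarrow> 'a) \<Rightarrow> real \<times> real \<Rightarrow> 'a" where
  "Lh H R z = H ((1 - fst z) + fst z * cfun (snd z), R ((1 - fst z) * snd z + fst z * dfun (snd z)))"

lemma Lh_cont:
  assumes H: "continuous_map (prod_topology (top_of_set {0..1}) X) X H"
    and R: "pathin X R"
  shows "continuous_map (top_of_set ({0..1} \<times> {0..1})) X (Lh H R)"
proof -
  have c1: "continuous_map (top_of_set ({0..1} \<times> {0..(1::real)})) (top_of_set {0..1})
              (\<lambda>z. (1 - fst z) + fst z * cfun (snd z))"
  proof (rule cm_real)
    show "continuous_on ({0..1} \<times> {0..1}) (\<lambda>z. (1 - fst z) + fst z * cfun (snd z))"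
      by (auto intro!: continuous_intros continuous_on_compose2[OF cfun_cont])
    fix z :: "real \<times> real" assume "z \<in> {0..1} \<times> {0..1}"
    then show "(1 - fst z) + fst z * cfun (snd z) \<in> {0..1}"
      by (intro cvx01' cfun_01) auto
  qed
  have c2: "continuous_map (top_of_set ({0..1} \<times> {0..(1::real)})) (top_of_set {0..1})
              (\<lambda>z. (1 - fst z) * snd z + fst z * dfun (snd z))"
  proof (rule cm_real)
    show "continuous_on ({0..1} \<times> {0..1}) (\<lambda>z. (1 - fst z) * snd z + fst z * dfun (snd z))"
      by (auto intro!: continuous_intros continuous_on_compose2[OF dfun_cont])
    fix z :: "real \<times> real" assume "z \<in> {0..1} \<times> {0..1}"
    then show "(1 - fst z) * snd z + fst z * dfun (snd z) \<in> {0..1}"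
      by (intro cvx01 dfun_01) auto
  qed
  have c2': "continuous_map (top_of_set ({0..1} \<times> {0..(1::real)})) X
              (\<lambda>z. R ((1 - fst z) * snd z + fst z * dfun (snd z)))"
    using continuous_map_compose[OF c2 R[unfolded pathin_def]] by (simp add: o_def)
  have "continuous_map (top_of_set ({0..1} \<times> {0..(1::real)})) (prod_topology (top_of_set {0..1}) X)
      (\<lambda>z. ((1 - fst z) + fst z * cfun (snd z), R ((1 - fst z) * snd z + fst z * dfun (snd z))))"
    by (rule continuous_map_pairedI[OF c1 c2'])
  from continuous_map_compose[OF this H] show ?thesis unfolding Lh_def by (simp add: o_def)
qed

lemma paste2:
  fixes p :: "'a::topological_space \<Rightarrow> real" and a :: real
  assumes f: "continuous_map (top_of_set {z \<in> S. p z \<le> a}) X f"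
    and g: "continuous_map (top_of_set {z \<in> S. a \<le> p z}) X g"
    and p: "continuous_on S p"
    and fg: "\<And>z. z \<in> S \<Longrightarrow> p z = a \<Longrightarrow> f z = g z"
  shows "continuous_map (top_of_set S) X (\<lambda>z. if p z \<le> a then f z else g z)"
proof (rule continuous_map_cases_le[where p = p and q = "\<lambda>z. a"])
  show "continuous_map (top_of_set S) euclideanreal p" using p by simp
  show "continuous_map (top_of_set S) euclideanreal (\<lambda>z. a)" by simp
  show "continuous_map (subtopology (top_of_set S) {z \<in> topspace (top_of_set S). p z \<le> a}) X f"
    unfolding sub_eq by (rule f)
  show "continuous_map (subtopology (top_of_set S) {z \<in> topspace (top_of_set S). a \<le> p z}) X g"
    unfolding sub_eq by (rule g)
  fix z assume "z \<in> topspace (top_of_set S)" "p z = a"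
  then show "f z = g z" using fg by simp
qed

lemma comp_cont:
  assumes "continuous_map (top_of_set T) X F" "continuous_on S \<phi>" "\<And>z. z \<in> S \<Longrightarrow> \<phi> z \<in> T"
  shows "continuous_map (top_of_set S) X (\<lambda>z. F (\<phi> z))"
proof -
  have "continuous_map (top_of_set S) (top_of_set T) \<phi>" using assms(2,3) by (rule cm_real)
  from continuous_map_compose[OF this assms(1)] show ?thesis by (simp add: o_def)
qed

lemma restr_cont:
  assumes "continuous_map (top_of_set T) X F" "S \<subseteq> T"
  shows "continuous_map (top_of_set S) X F"
  using comp_cont[OF assms(1), of S id] assms(2) by (auto intro: continuous_on_id)

definition Mh :: "(real \<times> 'a \<Rightarrow> 'a) \<Rightarrow> ('b \<Rightarrow> 'a) \<Rightarrow> (real \<times> real \<Rightarrow> 'b) \<Rightarrow> 'a \<Rightarrow> real \<times> real \<Rightarrow> 'a" where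
  "Mh H g hY x z = (if snd z \<le> 1/3 then H (cfun (snd z), x) else
      if snd z \<le> 2/3 then g (hY (fst z, 3 * snd z - 1)) else H (cfun (snd z), x))"

lemma cfun_13: "cfun (1/3) = 0" and cfun_23: "cfun (2/3) = 0" by (auto simp: cfun_def)

lemma Mh_cont:
  assumes H: "continuous_map (prod_topology (top_of_set {0..1}) X) X H"
    and g: "continuous_map Y X g"
    and hY: "continuous_map (top_of_set ({0..1} \<times> {0..1})) Y hY"
    and x: "x \<in> topspace X"
    and e0: "\<And>u. u \<in> {0..1} \<Longrightarrow> g (hY (u, 0)) = H (0, x)"
    and e1: "\<And>u. u \<in> {0..1} \<Longrightarrow> g (hY (u, 1)) = H (0, x)"
  shows "continuous_map (top_of_set ({0..1} \<times> {0..1})) X (Mh H g hY x)"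
proof -
  let ?S = "{0..1} \<times> {0..(1::real)}"
  have A: "continuous_map (top_of_set ?S) X (\<lambda>z. H (cfun (snd z), x))"
  proof -
    have "continuous_map (top_of_set ?S) (top_of_set {0..1}) (\<lambda>z. cfun (snd z))"
      by (rule cm_real) (auto intro!: continuous_intros continuous_on_compose2[OF cfun_cont] cfun_ge0 cfun_le1)
    moreover have "continuous_map (top_of_set ?S) X (\<lambda>z. x)" using x by simp
    ultimately have "continuous_map (top_of_set ?S) (prod_topology (top_of_set {0..1}) X) (\<lambda>z. (cfun (snd z), x))"
      by (rule continuous_map_pairedI)
    from continuous_map_compose[OF this H] show ?thesis by (simp add: o_def)
  qed
  have gh: "continuous_map (top_of_set ?S) X (\<lambda>z. g (hY z))"
    using continuous_map_compose[OF hY g] by (simp add: o_def)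
  have B: "continuous_map (top_of_set {z \<in> {z \<in> ?S. 1/3 \<le> snd z}. snd z \<le> 2/3}) X (\<lambda>z::real\<times>real. g (hY (fst z, 3 * snd z - 1)))"
    by (rule comp_cont[OF gh]) (auto intro!: continuous_intros)
  have inner: "continuous_map (top_of_set {z \<in> ?S. 1/3 \<le> snd z}) X
      (\<lambda>z. if snd z \<le> 2/3 then g (hY (fst z, 3 * snd z - 1)) else H (cfun (snd z), x))"
  proof (rule paste2[OF B])
    show "continuous_map (top_of_set {z \<in> {z \<in> ?S. 1/3 \<le> snd z}. 2/3 \<le> snd z}) X (\<lambda>z. H (cfun (snd z), x))"
      by (rule restr_cont[OF A]) auto
    show "continuous_on {z \<in> ?S. 1/3 \<le> snd z} snd" by (intro continuous_intros)
    fix z :: "real \<times> real" assume "z \<in> {z \<in> ?S. 1/3 \<le> snd z}" "snd z = 2/3"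
    then have "3 * snd z - 1 = 1" "cfun (snd z) = 0" "fst z \<in> {0..1}" by (auto simp: cfun_def)
    then show "g (hY (fst z, 3 * snd z - 1)) = H (cfun (snd z), x)"
      using e1[of "fst z"] by simp
  qed
  have "continuous_map (top_of_set ?S) X
      (\<lambda>z. if snd z \<le> 1/3 then H (cfun (snd z), x) else
         (if snd z \<le> 2/3 then g (hY (fst z, 3 * snd z - 1)) else H (cfun (snd z), x)))"
  proof (rule paste2[OF _ inner])
    show "continuous_map (top_of_set {z \<in> ?S. snd z \<le> 1/3}) X (\<lambda>z. H (cfun (snd z), x))"
      by (rule restr_cont[OF A]) auto
    show "continuous_on ?S snd" by (intro continuous_intros)
    fix z :: "real \<times> real" assume "z \<in> ?S" "snd z = 1/3"
    then have "3 * snd z - 1 = 0" "cfun (snd z) = 0" "fst z \<in> {0..1}" "snd z \<le> 2/3" by (auto simp: cfun_def)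
    then show "H (cfun (snd z), x) = (if snd z \<le> 2/3 then g (hY (fst z, 3 * snd z - 1)) else H (cfun (snd z), x))"
      using e0[of "fst z"] by simp
  qed
  then show ?thesis unfolding Mh_def[abs_def] .
qed

lemma Lh_Mh:
  fixes H :: "real \<times> 'a \<Rightarrow> 'a"
  assumes R0: "R 0 = x" and R1: "R 1 = x" and t: "t \<in> {0..1}"
    and hR: "\<And>s. s \<in> {0..1} \<Longrightarrow> hY (u, s) = k (R s)"
    and H0: "\<And>y. H (0, y) = g (k y)"
  shows "Lh H R (1, t) = Mh H g hY x (u, t)"
proof -
  have L: "Lh H R (1, t) = H (cfun t, R (dfun t))" unfolding Lh_def by simp
  consider "t \<le> 1/3" | "1/3 < t \<and> t \<le> 2/3" | "2/3 < t" by linarith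
  then show ?thesis
  proof cases
    case 1
    then have "dfun t = 0" by (auto simp: dfun_def)
    then show ?thesis using 1 L R0 unfolding Mh_def by simp
  next
    case 2
    then have "cfun t = 0" "dfun t = 3 * t - 1" "3 * t - 1 \<in> {0..1}" by (auto simp: cfun_def dfun_def)
    then show ?thesis using 2 L hR[of "3 * t - 1"] H0 unfolding Mh_def by simp
  next
    case 3
    then have "dfun t = 1" by (auto simp: dfun_def)
    then show ?thesis using 3 L R1 unfolding Mh_def by simp
  qed
qed

lemma pi1_inj:
  fixes H :: "real \<times> 'a \<Rightarrow> 'a"
  assumes k: "continuous_map X Y k" and g: "continuous_map Y X g"
    and H: "continuous_map (prod_topology (top_of_set {0..1}) X) X H"
    and H0: "\<And>y. H (0, y) = g (k y)" and H1: "\<And>y. H (1, y) = y"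
    and P: "pathin X P" and Q: "pathin X Q"
    and P0: "P 0 = x" and P1: "P 1 = x" and Q0: "Q 0 = x" and Q1: "Q 1 = x"
    and hom: "path_homotopic_in Y (k \<circ> P) (k \<circ> Q)"
  shows "path_homotopic_in X P Q"
proof -
  let ?S = "{0..1} \<times> {0..(1::real)}"
  obtain hY where hYc: "continuous_map (prod_topology (top_of_set {0..1::real}) (top_of_set {0..1::real})) Y hY"
    and hYe: "\<And>t. t \<in> {0..1} \<Longrightarrow> hY (0, t) = k (P t) \<and> hY (1, t) = k (Q t)"
    and hYs: "\<And>s. s \<in> {0..1} \<Longrightarrow> hY (s, 0) = k (P 0) \<and> hY (s, 1) = k (P 1)"
    using hom unfolding path_homotopic_in_def by auto
  have hY: "continuous_map (top_of_set ?S) Y hY" using hYc unfolding top_Times .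
  have x: "x \<in> topspace X"
    using P P0 unfolding pathin_def continuous_map_def by force
  have M: "continuous_map (top_of_set ?S) X (Mh H g hY x)"
  proof (rule Mh_cont[OF H g hY x])
    fix u :: real assume "u \<in> {0..1}"
    then show "g (hY (u, 0)) = H (0, x)" "g (hY (u, 1)) = H (0, x)" using hYs[of u] P0 P1 H0 by auto
  qed
  have LP: "continuous_map (top_of_set ?S) X (Lh H P)" by (rule Lh_cont[OF H P])
  have LQ: "continuous_map (top_of_set ?S) X (Lh H Q)" by (rule Lh_cont[OF H Q])
  define Phi where "Phi z = (if fst z \<le> 1/3 then Lh H P (3 * fst z, snd z) else
      if fst z \<le> 2/3 then Mh H g hY x (3 * fst z - 1, snd z) else Lh H Q (3 - 3 * fst z, snd z))" for z :: "real \<times> real"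
  have inner: "continuous_map (top_of_set {z \<in> ?S. 1/3 \<le> fst z}) X
      (\<lambda>z. if fst z \<le> 2/3 then Mh H g hY x (3 * fst z - 1, snd z) else Lh H Q (3 - 3 * fst z, snd z))"
  proof (rule paste2)
    show "continuous_map (top_of_set {z \<in> {z \<in> ?S. 1/3 \<le> fst z}. fst z \<le> 2/3}) X (\<lambda>z. Mh H g hY x (3 * fst z - 1, snd z))"
      by (rule comp_cont[OF M]) (auto intro!: continuous_intros)
    show "continuous_map (top_of_set {z \<in> {z \<in> ?S. 1/3 \<le> fst z}. 2/3 \<le> fst z}) X (\<lambda>z. Lh H Q (3 - 3 * fst z, snd z))"
      by (rule comp_cont[OF LQ]) (auto intro!: continuous_intros)
    show "continuous_on {z \<in> ?S. 1/3 \<le> fst z} fst" by (intro continuous_intros)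
    fix z :: "real \<times> real" assume z: "z \<in> {z \<in> ?S. 1/3 \<le> fst z}" "fst z = 2/3"
    then have "3 * fst z - 1 = 1" "3 - 3 * fst z = 1" "snd z \<in> {0..1}" by auto
    moreover have "Lh H Q (1, snd z) = Mh H g hY x (1, snd z)"
      by (rule Lh_Mh[where hY=hY and k=k and u=1 and g=g]) (use Q0 Q1 z hYe H0 in auto)
    ultimately show "Mh H g hY x (3 * fst z - 1, snd z) = Lh H Q (3 - 3 * fst z, snd z)" by simp
  qed
  have cont: "continuous_map (top_of_set ?S) X Phi"
    unfolding Phi_def
  proof (rule paste2[OF _ inner])
    show "continuous_map (top_of_set {z \<in> ?S. fst z \<le> 1/3}) X (\<lambda>z. Lh H P (3 * fst z, snd z))"
      by (rule comp_cont[OF LP]) (auto intro!: continuous_intros)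
    show "continuous_on ?S fst" by (intro continuous_intros)
    fix z :: "real \<times> real" assume z: "z \<in> ?S" "fst z = 1/3"
    then have "3 * fst z = 1" "3 * fst z - 1 = 0" "snd z \<in> {0..1}" "fst z \<le> 2/3" by auto
    moreover have "Lh H P (1, snd z) = Mh H g hY x (0, snd z)"
      by (rule Lh_Mh[where hY=hY and k=k and u=0 and g=g]) (use P0 P1 z hYe H0 in auto)
    ultimately show "Lh H P (3 * fst z, snd z) = (if fst z \<le> 2/3 then Mh H g hY x (3 * fst z - 1, snd z) else Lh H Q (3 - 3 * fst z, snd z))"
      by simp
  qed
  have c0: "cfun 0 = 1" "dfun 0 = 0" "cfun 1 = 1" "dfun 1 = 1" by (auto simp: cfun_def dfun_def)
  show ?thesis unfolding path_homotopic_in_def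
  proof (intro exI conjI ballI)
    show "continuous_map (prod_topology (top_of_set {0..1}) (top_of_set {0..1})) X Phi"
      unfolding top_Times by (rule cont)
    fix t :: real assume "t \<in> {0..1}"
    show "Phi (0, t) = P t" unfolding Phi_def Lh_def using H1 by simp
    show "Phi (1, t) = Q t" unfolding Phi_def Lh_def using H1 by simp
  next
    fix s :: real assume s: "s \<in> {0..1}"
    show "Phi (s, 0) = P 0" unfolding Phi_def Lh_def Mh_def using H1 c0 P0 Q0 by simp
    show "Phi (s, 1) = P 1" unfolding Phi_def Lh_def Mh_def using H1 c0 P1 Q1 by simp
  qed
qed



lemma null_compose:
  assumes N: "null_sequence X x \<alpha>" and k: "continuous_map X Y k"
  shows "null_sequence Y (k x) (\<lambda>n. k \<circ> \<alpha> n)"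
  unfolding null_sequence_def
proof (intro conjI allI impI)
  fix n :: nat assume n: "1 \<le> n"
  show "loop_at Y (k x) (k \<circ> \<alpha> n)"
    using null_loop[OF N n] pathin_compose[OF _ k] unfolding loop_at_def by simp
next
  fix U assume U: "openin Y U \<and> k x \<in> U"
  have x: "x \<in> topspace X"
    using null_loop(1,2)[OF N, of 1] unfolding pathin_def continuous_map_def by force
  have "openin X {y \<in> topspace X. k y \<in> U}" using k U by (simp add: continuous_map)
  moreover have "x \<in> {y \<in> topspace X. k y \<in> U}" using x U by simp
  ultimately obtain N0 where N0: "\<And>n. n \<ge> N0 \<Longrightarrow> \<alpha> n ` {0..1} \<subseteq> {y \<in> topspace X. k y \<in> U}"
    using N unfolding null_sequence_def by blast
  show "\<exists>N. \<forall>n\<ge>N. (k \<circ> \<alpha> n) ` {0..1} \<subseteq> U"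
  proof (intro exI allI impI subsetI)
    fix n z assume n: "N0 \<le> n" and z: "z \<in> (k \<circ> \<alpha> n) ` {0..1}"
    then obtain t where t: "t \<in> {0..1}" "z = k (\<alpha> n t)" by auto
    then have "\<alpha> n t \<in> {y \<in> topspace X. k y \<in> U}" using N0[OF n] by blast
    then show "z \<in> U" using t by simp
  qed
qed

lemma null_perm:
  assumes N: "null_sequence X x \<alpha>" and b: "bij_betw \<phi> {1..} {1..}"
  shows "null_sequence X x (\<alpha> \<circ> \<phi>)"
  unfolding null_sequence_def
proof (intro conjI allI impI)
  fix n :: nat assume n: "1 \<le> n"
  then have "\<phi> n \<ge> 1" using b unfolding bij_betw_def by auto
  then show "loop_at X x ((\<alpha> \<circ> \<phi>) n)" using N unfolding null_sequence_def by simp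
next
  fix U assume U: "openin X U \<and> x \<in> U"
  then obtain N0 where N0: "\<And>n. n \<ge> N0 \<Longrightarrow> \<alpha> n ` {0..1} \<subseteq> U"
    using N unfolding null_sequence_def by blast
  define F where "F = {n \<in> {1..}. \<phi> n < N0}"
  have "inj_on \<phi> F" using b unfolding bij_betw_def F_def by (auto intro: inj_on_subset)
  moreover have "finite (\<phi> ` F)" by (rule finite_subset[of _ "{..<N0}"]) (auto simp: F_def)
  ultimately have "finite F" using finite_imageD by blast
  then obtain K where K: "F \<subseteq> {..<K}" using finite_nat_bounded by blast
  show "\<exists>N. \<forall>n\<ge>N. (\<alpha> \<circ> \<phi>) n ` {0..1} \<subseteq> U"
  proof (intro exI allI impI)
    fix n assume n: "max K 1 \<le> n"
    then have "n \<notin> F" using K by auto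
    then have "\<phi> n \<ge> N0" using n unfolding F_def by auto
    then show "(\<alpha> \<circ> \<phi>) n ` {0..1} \<subseteq> U" using N0 by simp
  qed
qed

lemma tau_map: "continuous_map (top_of_set {0..1}) (top_of_set hawaiian_earring) tau_loop"
  by (rule cm_real[OF continuous_on_subset[OF tau_cont]]) (auto simp: tau_earring)

lemma tp_path:
  assumes N: "null_sequence X x \<alpha>"
  shows "pathin X (transfinite_product X x \<alpha>)" "transfinite_product X x \<alpha> 0 = x"
    "transfinite_product X x \<alpha> 1 = x"
proof -
  show "pathin X (transfinite_product X x \<alpha>)"
    unfolding pathin_def transfinite_product_def
    by (rule continuous_map_compose[OF tau_map induced_props(1)[OF N]])
  show "transfinite_product X x \<alpha> 0 = x" "transfinite_product X x \<alpha> 1 = x"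
    unfolding transfinite_product_def using tau_0 tau_1 induced_props(2)[OF N]
    by (simp_all add: HE_base_def)
qed

lemma tp_compose:
  assumes N: "null_sequence X x \<alpha>" and k: "continuous_map X Y k"
  shows "transfinite_product Y (k x) (\<lambda>n. k \<circ> \<alpha> n) = k \<circ> transfinite_product X x \<alpha>"
proof
  fix t
  have N': "null_sequence Y (k x) (\<lambda>n. k \<circ> \<alpha> n)" by (rule null_compose[OF N k])
  have "induced_map Y (k x) (\<lambda>n. k \<circ> \<alpha> n) (tau_loop t) = (k \<circ> induced_map X x \<alpha>) (tau_loop t)"
  proof (rule induced_unique[OF _ tau_earring])
    fix n :: nat and s :: real assume "n \<ge> 1" "s \<in> {0..1}"
    then show "induced_map Y (k x) (\<lambda>n. k \<circ> \<alpha> n) (HE_loop n s) = (k \<circ> induced_map X x \<alpha>) (HE_loop n s)"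
      using induced_props(3)[OF N'] induced_props(3)[OF N] by simp
  qed
  then show "transfinite_product Y (k x) (\<lambda>n. k \<circ> \<alpha> n) t = (k \<circ> transfinite_product X x \<alpha>) t"
    unfolding transfinite_product_def by simp
qed

lemma part1:
  fixes X :: "'a topology" and Y :: "'b topology"
  assumes he: "homotopy_equivalence X Y k" and x: "x \<in> topspace X"
    and tY: "transfinitely_pi1_commutative Y (k x)"
  shows "transfinitely_pi1_commutative X x"
  unfolding transfinitely_pi1_commutative_def
proof (intro allI impI)
  fix \<alpha> and \<phi> :: "nat \<Rightarrow> nat"
  assume a: "null_sequence X x \<alpha> \<and> bij_betw \<phi> {1..} {1..}"
  then have N: "null_sequence X x \<alpha>" and b: "bij_betw \<phi> {1..} {1..}" by auto
  have Nphi: "null_sequence X x (\<alpha> \<circ> \<phi>)" by (rule null_perm[OF N b])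
  obtain g where k: "continuous_map X Y k" and g: "continuous_map Y X g"
    and hw: "homotopic_with (\<lambda>h. True) X X (g \<circ> k) id"
    using he unfolding homotopy_equivalence_def by blast
  obtain H where H: "continuous_map (prod_topology (top_of_set {0..1::real}) X) X H"
    and H0: "\<And>y. H (0, y) = g (k y)" and H1: "\<And>y. H (1, y) = y"
    using hw unfolding homotopic_with_def by auto
  have NY: "null_sequence Y (k x) (\<lambda>n. k \<circ> \<alpha> n)" by (rule null_compose[OF N k])
  have eq: "(\<lambda>n. k \<circ> \<alpha> n) \<circ> \<phi> = (\<lambda>n. k \<circ> (\<alpha> \<circ> \<phi>) n)" by (simp add: o_def)
  have "path_homotopic_in Y (transfinite_product Y (k x) (\<lambda>n. k \<circ> \<alpha> n))
       (transfinite_product Y (k x) ((\<lambda>n. k \<circ> \<alpha> n) \<circ> \<phi>))"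
  proof -
    have "\<forall>\<beta> \<psi>. null_sequence Y (k x) \<beta> \<and> bij_betw \<psi> {1..} {1..} \<longrightarrow>
        path_homotopic_in Y (transfinite_product Y (k x) \<beta>) (transfinite_product Y (k x) (\<beta> \<circ> \<psi>))"
      using tY unfolding transfinitely_pi1_commutative_def .
    then show ?thesis using NY b by blast
  qed
  then have hom: "path_homotopic_in Y (k \<circ> transfinite_product X x \<alpha>) (k \<circ> transfinite_product X x (\<alpha> \<circ> \<phi>))"
    unfolding eq tp_compose[OF N k] tp_compose[OF Nphi k] .
  show "path_homotopic_in X (transfinite_product X x \<alpha>) (transfinite_product X x (\<alpha> \<circ> \<phi>))"
    by (rule pi1_inj[OF k g H H0 H1 tp_path(1)[OF N] tp_path(1)[OF Nphi] tp_path(2,3)[OF N]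
          tp_path(2,3)[OF Nphi] hom])
qed

lemma based_he:
  assumes "based_homotopy_equivalence X x Y y f"
  shows "homotopy_equivalence X Y f" "\<exists>g. homotopy_equivalence Y X g \<and> g y = x"
    "x \<in> topspace X" "y \<in> topspace Y" "f x = y"
proof -
  obtain g where f: "continuous_map X Y f" and g: "continuous_map Y X g" and gy: "g y = x"
    and h1: "homotopic_with (\<lambda>h. h x = x) X X (g \<circ> f) id"
    and h2: "homotopic_with (\<lambda>h. h y = y) Y Y (f \<circ> g) id"
    using assms unfolding based_homotopy_equivalence_def by blast
  have h1': "homotopic_with (\<lambda>h. True) X X (g \<circ> f) id" by (rule homotopic_with_mono[OF h1]) simp
  have h2': "homotopic_with (\<lambda>h. True) Y Y (f \<circ> g) id" by (rule homotopic_with_mono[OF h2]) simp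
  show "homotopy_equivalence X Y f" unfolding homotopy_equivalence_def using f g h1' h2' by blast
  show "\<exists>g. homotopy_equivalence Y X g \<and> g y = x" unfolding homotopy_equivalence_def using f g h1' h2' gy by blast
  show "x \<in> topspace X" "y \<in> topspace Y" "f x = y" using assms unfolding based_homotopy_equivalence_def by auto
qed

theorem mainTheorem5:
  fixes X :: "'a topology" and Y :: "'b topology"
  shows "(\<forall>k x. homotopy_equivalence X Y k \<and> x \<in> topspace X \<and>
            transfinitely_pi1_commutative Y (k x) \<longrightarrow> transfinitely_pi1_commutative X x) \<and>
         (\<forall>f x y. based_homotopy_equivalence X x Y y f \<longrightarrow>
            (transfinitely_pi1_commutative X x \<longleftrightarrow> transfinitely_pi1_commutative Y y))"
proof (intro conjI allI impI)
  fix k x assume "homotopy_equivalence X Y k \<and> x \<in> topspace X \<and> transfinitely_pi1_commutative Y (k x)"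
  then show "transfinitely_pi1_commutative X x" using part1[of X Y k x] by blast
next
  fix f x y assume b: "based_homotopy_equivalence X x Y y f"
  obtain g where g: "homotopy_equivalence Y X g" "g y = x" using based_he(2)[OF b] by blast
  show "transfinitely_pi1_commutative X x \<longleftrightarrow> transfinitely_pi1_commutative Y y"
  proof
    assume "transfinitely_pi1_commutative X x"
    then show "transfinitely_pi1_commutative Y y" using part1[OF g(1) based_he(4)[OF b]] g(2) by simp
  next
    assume "transfinitely_pi1_commutative Y y"
    then show "transfinitely_pi1_commutative X x" using part1[OF based_he(1)[OF b] based_he(3)[OF b]] based_he(5)[OF b] by simp
  qed
qed


end
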